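(* Let $c\ge 0$ and consider the planar polynomial system $$\dot x=x(1-y+cx),\qquad \dot y=y(-1+x).$$ The unique irreducible Darboux polynomials of this system with non-zero cofactors are $x$ and $y$.
   Context: For the vector field $\mathcal{Z}=x(1-y+cx)\partial_x+y(-1+x)\partial_y$, a Darboux polynomial is $f\in\mathbb{C}[x,y]$ with $\mathcal{Z}f=kf$ for some polynomial $k$ (the cofactor), necessarily of degree at most one. *)

theory Defs
  imports Complex_Main "HOL-Computational_Algebra.Computational_Algebra"
begin

text \<open>Bivariate polynomials in C[x,y] are represented as \<open>complex poly poly\<close>:
  polynomials in y whose coefficients are polynomials in x.\<close>

definition px :: "complex poly poly" where
  "px = [:[:0, 1:]:]"

definition py :: "complex poly poly" where
  "py = [:0, 1:]"

definition pconst :: "complex \<Rightarrow> complex poly poly" where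
  "pconst a = [:[:a:]:]"

definition pdx :: "complex poly poly \<Rightarrow> complex poly poly" where
  "pdx f = map_poly pderiv f"

definition pdy :: "complex poly poly \<Rightarrow> complex poly poly" where
  "pdy f = pderiv f"

definition Zfield :: "real \<Rightarrow> complex poly poly \<Rightarrow> complex poly poly" where
  "Zfield c f = px * (1 - py + pconst (complex_of_real c) * px) * pdx f
                + py * (-1 + px) * pdy f"

definition darboux :: "real \<Rightarrow> complex poly poly \<Rightarrow> complex poly poly \<Rightarrow> bool" where
  "darboux c f k \<longleftrightarrow> f \<noteq> 0 \<and> Zfield c f = k * f"

end

theory Submission
  imports Defs
begin

lemma px_mult: "px * q = smult [:0,1:] q"
  by (simp add: px_def)
lemma py_mult: "py * q = pCons 0 q"
  by (simp add: py_def)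
lemma pconst_mult: "pconst a * q = smult [:a:] q"
  by (simp add: pconst_def)

lemma Z_expand: "Zfield c f = smult [:0,1,complex_of_real c:] (pdx f) - pCons 0 (smult [:0,1:] (pdx f)) + smult [:-1,1:] (pCons 0 (pdy f))"
proof -
  have "px * (1 - py + pconst (complex_of_real c) * px) * pdx f
     = px * (pdx f) - px * (py * pdx f) + pconst (complex_of_real c) * (px * (px * pdx f))"
    by (simp add: algebra_simps)
  also have "\<dots> = smult [:0,1,complex_of_real c:] (pdx f) - pCons 0 (smult [:0,1:] (pdx f))"
    by (simp add: px_mult py_mult pconst_mult smult_diff_right flip: smult_add_left)
  finally have 1: "px * (1 - py + pconst (complex_of_real c) * px) * pdx f = \<dots>" .
  have m1: "-1 + px = [:[:-1,1:]:]"
    by (simp add: px_def one_pCons)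
  have 2: "py * (-1 + px) * pdy f = smult [:-1,1:] (pCons 0 (pdy f))"
    unfolding m1 by (simp add: py_mult)
  show ?thesis unfolding Zfield_def 1 2 ..
qed

lemma coeff_Z: "coeff (Zfield c f) i =
   [:0,1,complex_of_real c:] * pderiv (coeff f i)
   - (case i of 0 \<Rightarrow> 0 | Suc j \<Rightarrow> [:0,1:] * pderiv (coeff f j))
   + smult (of_nat i) ([:-1,1:] * coeff f i)"
  by (cases i) (auto simp: Z_expand pdx_def pdy_def coeff_map_poly coeff_pderiv
        of_nat_poly algebra_simps)

lemma deg_le1_pCons:
  fixes k :: "'a::zero poly"
  assumes "degree k \<le> 1" shows "k = pCons (coeff k 0) [:coeff k 1:]"
proof (rule poly_eqI)
  fix n show "coeff k n = coeff (pCons (coeff k 0) [:coeff k 1:]) n"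
    using assms by (cases n) (auto simp: coeff_pCons coeff_eq_0 split: nat.split)
qed

lemma coeff_k_mult: "coeff (pCons k0 [:k1:] * f) i = k0 * coeff f i + (case i of 0 \<Rightarrow> 0 | Suc j \<Rightarrow> k1 * coeff f j)"
  by (cases i) (auto simp: algebra_simps)

lemma px_dvd_if: assumes "\<forall>i. poly (coeff f i) 0 = 0" shows "px dvd f"
proof -
  have "f = px * map_poly (\<lambda>p. p div [:0,1:]) f"
  proof (rule poly_eqI)
    fix i
    have "[:0, 1:] dvd coeff f i" using assms dvd_iff_poly_eq_0[of "0::complex" "coeff f i"] by simp
    then have "coeff f i = [:0,1:] * (coeff f i div [:0,1:])" by (rule dvd_mult_div_cancel[symmetric])
    then show "coeff f i = coeff (px * map_poly (\<lambda>p. p div [:0,1:]) f) i"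
      by (simp add: px_mult coeff_map_poly)
  qed
  then show ?thesis by (metis dvd_triv_left)
qed

lemma py_dvd_if: assumes "coeff f 0 = 0" shows "py dvd f"
  using assms dvd_iff_poly_eq_0[of "0" f] by (simp add: py_def poly_0_coeff_0)

lemma coeff_mult_low: assumes "\<forall>t\<le>n. coeff h t = 0" shows "coeff (r * h) n = 0"
  using assms by (simp add: coeff_mult)

lemma main_const:
  assumes Z: "Zfield c f = k * f" and f0: "f \<noteq> 0" and k0: "k \<noteq> 0"
    and npx: "\<not> px dvd f" and npy: "\<not> py dvd f"
  shows "degree f = 0 \<and> degree (coeff f 0) = 0"
proof -
  define N where "N = degree f"
  define a where "a = coeff f"
  have degZ: "degree (Zfield c f) \<le> N + 1"
  proof (rule degree_le, intro allI impI)
    fix i assume "N + 1 < i"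
    then obtain j where "i = Suc j" "N < j" by (cases i) auto
    then show "coeff (Zfield c f) i = 0"
      by (simp add: coeff_Z N_def coeff_eq_0)
  qed
  have "degree (k * f) = degree k + N" using f0 k0 by (simp add: degree_mult_eq N_def)
  then have "degree k \<le> 1" using degZ Z by simp
  then have kk: "k = pCons (coeff k 0) [:coeff k 1:]" by (rule deg_le1_pCons)
  define k0 where "k0 = coeff k 0"
  define k1 where "k1 = coeff k 1"
  have star: "[:0,1,complex_of_real c:] * pderiv (a i)
   - (case i of 0 \<Rightarrow> 0 | Suc j \<Rightarrow> [:0,1:] * pderiv (a j))
   + smult (of_nat i) ([:-1,1:] * a i) = k0 * a i + (case i of 0 \<Rightarrow> 0 | Suc j \<Rightarrow> k1 * a j)" for i
  proof -
    have "coeff (Zfield c f) i = coeff (pCons k0 [:k1:] * f) i" using Z kk k0_def k1_def by simp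
    then show ?thesis unfolding coeff_Z coeff_k_mult a_def .
  qed
  define g where "g i = poly (a i) 0" for i
  define \<kappa>0 where "\<kappa>0 = poly k0 0"
  define \<kappa>1 where "\<kappa>1 = poly k1 0"
  have E0: "- (of_nat i * g i) = \<kappa>0 * g i + (case i of 0 \<Rightarrow> 0 | Suc j \<Rightarrow> \<kappa>1 * g j)" for i
  proof -
    have "poly (lhs) 0 = poly (rhs) 0" if "lhs = rhs" for lhs rhs :: "complex poly" using that by simp
    from this[OF star[of i]] show ?thesis
      by (cases i) (simp_all add: g_def \<kappa>0_def \<kappa>1_def)
  qed
  have gex: "\<exists>i. g i \<noteq> 0" using px_dvd_if npx by (auto simp: g_def a_def)
  define m where "m = (LEAST i. g i \<noteq> 0)"
  have gm: "g m \<noteq> 0" using gex unfolding m_def by (rule LeastI_ex)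
  have glow: "g i = 0" if "i < m" for i using that not_less_Least unfolding m_def by blast
  have "- (of_nat m * g m) = \<kappa>0 * g m"
    using E0[of m] glow by (cases m) auto
  then have km: "\<kappa>0 = - of_nat m" using gm
    by (metis mult_minus_left mult_right_cancel)
  define S where "S = {i. g i \<noteq> 0}"
  have gN: "g i = 0" if "i > N" for i using that by (simp add: g_def a_def N_def coeff_eq_0)
  have "S \<subseteq> {..N}" by (metis (mono_tags) atMost_iff gN mem_Collect_eq not_le subsetI S_def)
  then have finS: "finite S" by (rule finite_subset) simp
  define M where "M = Max S"
  have "M \<in> S" unfolding M_def using finS gm S_def by (intro Max_in) auto
  then have gM: "g M \<noteq> 0" by (simp add: S_def)
  have "g (Suc M) = 0"
  proof (rule ccontr)
    assume "g (Suc M) \<noteq> 0"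
    then have "Suc M \<le> M" unfolding M_def using finS by (intro Max_ge) (auto simp: S_def)
    then show False by simp
  qed
  then have "\<kappa>1 * g M = 0" using E0[of "Suc M"] by simp
  then have k1z: "\<kappa>1 = 0" using gM by simp
  define h where "h = a 0"
  have h0: "h \<noteq> 0" using py_dvd_if npy by (auto simp: h_def a_def)
  have sB: "[:0,1,complex_of_real c:] * pderiv h = k0 * h" using star[of 0] by (simp add: h_def)
  have hex: "\<exists>j. coeff h j \<noteq> 0" using h0 by (meson leading_coeff_0_iff)
  define j where "j = (LEAST j. coeff h j \<noteq> 0)"
  have hj: "coeff h j \<noteq> 0" using hex unfolding j_def by (rule LeastI_ex)
  have hlow: "coeff h i = 0" if "i < j" for i using that not_less_Least unfolding j_def by blast
  have L: "coeff ([:0,1,complex_of_real c:] * pderiv h) j = of_nat j * coeff h j"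
  proof (cases j)
    case 0 then show ?thesis by simp
  next
    case (Suc j')
    have "coeff ([:0,1,complex_of_real c:] * pderiv h) j = coeff (pderiv h) j'
       + (case j' of 0 \<Rightarrow> 0 | Suc j'' \<Rightarrow> complex_of_real c * coeff (pderiv h) j'')"
      using Suc by (cases j') (auto simp: algebra_simps)
    also have "\<dots> = of_nat j * coeff h j"
      using Suc hlow by (cases j') (auto simp: coeff_pderiv)
    finally show ?thesis .
  qed
  have R: "coeff (k0 * h) j = \<kappa>0 * coeff h j"
  proof -
    have "coeff (k0*h) j = (\<Sum>i\<le>j. coeff k0 i * coeff h (j-i))" by (simp add: coeff_mult)
    also have "\<dots> = (\<Sum>i\<in>{0}. coeff k0 i * coeff h (j-i))"
      by (rule sum.mono_neutral_right) (auto simp: hlow)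
    finally show ?thesis by (simp add: \<kappa>0_def poly_0_coeff_0)
  qed
  have "of_nat j * coeff h j = \<kappa>0 * coeff h j" using L R sB by metis
  then have "(of_nat j :: complex) = - of_nat m" using hj km
    by (metis mult_minus_left mult_right_cancel)
  then have "of_nat (j + m) = (0::complex)" by (simp add: add_eq_0_iff)
  then have "m = 0" by (simp only: of_nat_eq_0_iff)
  then have kz: "\<kappa>0 = 0" using km by simp
  have aN: "a (Suc N) = 0" by (simp add: a_def N_def coeff_eq_0)
  have "- ([:0,1:] * pderiv (a N)) = k1 * a N" using star[of "Suc N"] aN kz by simp
  moreover have "[:0,1:] dvd k1" using k1z dvd_iff_poly_eq_0[of 0 k1] by (simp add: \<kappa>1_def)
  then obtain q where q: "k1 = [:0,1:] * q" by blast
  ultimately have "[:0,1:] * (- pderiv (a N)) = [:0,1:] * (q * a N)" by (simp add: algebra_simps)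
  then have qa: "- pderiv (a N) = q * a N" by (subst (asm) mult_left_cancel) simp_all
  have aN0: "a N \<noteq> 0" using f0 by (simp add: a_def N_def)
  have pd0: "pderiv (a N) = 0"
  proof (rule ccontr)
    assume nz: "pderiv (a N) \<noteq> 0"
    then have q0: "q \<noteq> 0" using qa by auto
    have "degree (pderiv (a N)) = degree (a N) - 1" by (rule degree_pderiv)
    moreover have "degree (a N) > 0" using nz pderiv_eq_0_iff by auto
    moreover have "degree (q * a N) = degree q + degree (a N)" using q0 aN0 by (simp add: degree_mult_eq)
    moreover have "degree (- pderiv (a N)) = degree (pderiv (a N))" by simp
    ultimately show False using qa by simp
  qed
  then have dN: "degree (a N) = 0" using pderiv_eq_0_iff by blast
  then have "g N \<noteq> 0" using aN0 by (metis g_def leading_coeff_0_iff poly_0_coeff_0)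
  moreover have "- (of_nat N * g N) = 0" using E0[of N] kz k1z by (cases N) auto
  ultimately have "N = 0" by simp
  then show ?thesis using dN by (simp add: N_def a_def)
qed


lemma deg0_const: "degree (p::'a::zero poly) = 0 \<Longrightarrow> p = [:coeff p 0:]"
  using degree_0_id[of p] by simp

lemma unit_pp: "(p::complex poly poly) dvd 1 \<longleftrightarrow> (\<exists>a. a \<noteq> 0 \<and> p = pconst a)"
  unfolding pconst_def is_unit_poly_iff[of p] is_unit_poly_iff by (auto simp: dvd_field_iff)

lemma pconst_px: "pconst a * px = [:[:0,a:]:]" by (simp add: pconst_def px_def)
lemma pconst_py: "pconst a * py = [:0,[:a:]:]" by (simp add: pconst_def py_def)

lemma irr_px: assumes "a \<noteq> 0" shows "irreducible (pconst a * px)"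
  unfolding pconst_px
proof (rule irreducibleI)
  show "[:[:0, a:]:] \<noteq> 0" using assms by simp
  show "\<not> is_unit [:[:0, a:]:]" using assms by (auto simp: unit_pp pconst_def)
  fix u v :: "complex poly poly" assume uv: "[:[:0, a:]:] = u * v"
  then have "u \<noteq> 0" "v \<noteq> 0" using assms by auto
  then have "degree (u*v) = degree u + degree v" by (rule degree_mult_eq)
  then have "degree u + degree v = 0" using uv[symmetric] by simp
  then have u: "u = [:coeff u 0:]" and v: "v = [:coeff v 0:]" by (auto intro: deg0_const)
  have e: "[:0,a:] = coeff u 0 * coeff v 0" using uv by (subst (asm) u, subst (asm) v) simp
  then have "coeff u 0 \<noteq> 0" "coeff v 0 \<noteq> 0" using assms by auto
  then have "degree (coeff u 0 * coeff v 0) = degree (coeff u 0) + degree (coeff v 0)" by (rule degree_mult_eq)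
  then have "degree (coeff u 0) + degree (coeff v 0) = 1" using e[symmetric] assms by simp
  then have "degree (coeff u 0) = 0 \<or> degree (coeff v 0) = 0" by auto
  then show "is_unit u \<or> is_unit v"
    using \<open>coeff u 0 \<noteq> 0\<close> \<open>coeff v 0 \<noteq> 0\<close> u v
    by (auto simp: is_unit_iff_degree) (metis is_unit_const_poly_iff is_unit_iff_degree)+
qed

lemma irr_py: assumes "a \<noteq> 0" shows "irreducible (pconst a * py)"
  unfolding pconst_py
proof (rule irreducibleI)
  show "[:0, [:a:]:] \<noteq> 0" using assms by simp
  show "\<not> is_unit [:0, [:a:]:]" using assms by (auto simp: unit_pp pconst_def)
  fix u v :: "complex poly poly" assume uv: "[:0, [:a:]:] = u * v"
  then have "u \<noteq> 0" "v \<noteq> 0" using assms by auto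
  then have "degree (u*v) = degree u + degree v" by (rule degree_mult_eq)
  then have "degree u + degree v = 1" using uv[symmetric] assms by simp
  then have "degree u = 0 \<or> degree v = 0" by auto
  then show "is_unit u \<or> is_unit v"
  proof
    assume "degree u = 0"
    then have u: "u = [:coeff u 0:]" by (rule deg0_const)
    have "coeff (u * v) 1 = [:a:]" using uv[symmetric] by simp
    then have "coeff u 0 * coeff v 1 = [:a:]" by (subst (asm) u) simp
    then have "coeff u 0 dvd [:a:]" by (rule dvdI[OF sym])
    moreover have "is_unit [:a:]" using assms by (simp add: is_unit_const_poly_iff dvd_field_iff)
    ultimately have "is_unit (coeff u 0)" using dvd_unit_imp_unit by blast
    then show ?thesis by (subst u) (simp add: is_unit_const_poly_iff)
  next
    assume "degree v = 0"
    then have v: "v = [:coeff v 0:]" by (rule deg0_const)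
    have "coeff (u * v) 1 = [:a:]" using uv[symmetric] by simp
    then have "coeff v 0 * coeff u 1 = [:a:]" by (subst (asm) v) (simp add: mult.commute)
    then have "coeff v 0 dvd [:a:]" by (rule dvdI[OF sym])
    moreover have "is_unit [:a:]" using assms by (simp add: is_unit_const_poly_iff dvd_field_iff)
    ultimately have "is_unit (coeff v 0)" using dvd_unit_imp_unit by blast
    then show ?thesis by (subst v) (simp add: is_unit_const_poly_iff)
  qed
qed

lemma darb_px: assumes "a \<noteq> 0" shows "darboux c (pconst a * px) (1 - py + pconst (complex_of_real c) * px)"
proof -
  have 1: "pdx (pconst a * px) = pconst a" unfolding pconst_px pdx_def
    by (rule poly_eqI) (simp add: coeff_map_poly pconst_def coeff_pCons pderiv_pCons split: nat.split)
  have 2: "pdy (pconst a * px) = 0" by (simp add: pconst_px pdy_def)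
  show ?thesis using assms unfolding darboux_def Zfield_def 1 2
    by (simp add: algebra_simps px_def py_def pconst_def)
qed

lemma darb_py: assumes "a \<noteq> 0" shows "darboux c (pconst a * py) (-1 + px)"
proof -
  have 1: "pdx (pconst a * py) = 0" unfolding pconst_py pdx_def
    by (rule poly_eqI) (simp add: coeff_map_poly coeff_pCons split: nat.split)
  have 2: "pdy (pconst a * py) = pconst a" unfolding pconst_py pdy_def by (simp add: pderiv_pCons pconst_def)
  show ?thesis using assms unfolding darboux_def Zfield_def 1 2
    by (simp add: algebra_simps px_def py_def pconst_def)
qed

lemma cof_px_nz: "1 - py + pconst (complex_of_real c) * px \<noteq> 0"
proof
  assume "1 - py + pconst (complex_of_real c) * px = 0"
  then have "coeff (1 - py + pconst (complex_of_real c) * px) 1 = 0" by simp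
  then show False by (simp add: py_def px_def pconst_def)
qed

lemma cof_py_nz: "-1 + px \<noteq> 0"
proof
  assume "-1 + px = 0"
  then have "coeff (coeff (-1 + px) 0) 1 = 0" by simp
  then show False by (simp add: px_def)
qed

lemma px_nunit: "\<not> is_unit px" by (auto simp: unit_pp px_def pconst_def)
lemma py_nunit: "\<not> is_unit py" by (auto simp: unit_pp py_def pconst_def)

theorem lemma3p2:
  fixes c :: real
  assumes "c \<ge> 0"
  shows "{f. irreducible f \<and> (\<exists>k. k \<noteq> 0 \<and> darboux c f k)}
         = {pconst a * px | a. a \<noteq> 0} \<union> {pconst a * py | a. a \<noteq> 0}"
proof (intro equalityI subsetI)
  fix f assume "f \<in> {f. irreducible f \<and> (\<exists>k. k \<noteq> 0 \<and> darboux c f k)}"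
  then obtain k where irr: "irreducible f" and k0: "k \<noteq> 0" and f0: "f \<noteq> 0"
    and Z: "Zfield c f = k * f" by (auto simp: darboux_def)
  show "f \<in> {pconst a * px | a. a \<noteq> 0} \<union> {pconst a * py | a. a \<noteq> 0}"
  proof (cases "px dvd f")
    case True
    then obtain g where fg: "f = px * g" by blast
    then have "is_unit g" using irreducibleD[OF irr fg] px_nunit by blast
    then obtain a where "a \<noteq> 0" "g = pconst a" by (auto simp: unit_pp)
    then show ?thesis using fg by (auto simp: mult.commute)
  next
    case npx: False
    show ?thesis
    proof (cases "py dvd f")
      case True
      then obtain g where fg: "f = py * g" by blast
      then have "is_unit g" using irreducibleD[OF irr fg] py_nunit by blast
      then obtain a where "a \<noteq> 0" "g = pconst a" by (auto simp: unit_pp)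
      then show ?thesis using fg by (auto simp: mult.commute)
    next
      case npy: False
      have "degree f = 0 \<and> degree (coeff f 0) = 0" using main_const[OF Z f0 k0 npx npy] .
      then have "f = pconst (coeff (coeff f 0) 0)" unfolding pconst_def by (metis deg0_const)
      moreover have "coeff (coeff f 0) 0 \<noteq> 0" using f0 calculation by (auto simp: pconst_def)
      ultimately have "is_unit f" by (auto simp: unit_pp)
      then show ?thesis using irreducible_not_unit[OF irr] by blast
    qed
  qed
next
  fix f assume "f \<in> {pconst a * px | a. a \<noteq> 0} \<union> {pconst a * py | a. a \<noteq> 0}"
  then show "f \<in> {f. irreducible f \<and> (\<exists>k. k \<noteq> 0 \<and> darboux c f k)}"
    using irr_px irr_py darb_px darb_py cof_px_nz cof_py_nz by blast
qed

end
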